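(* Let $\mathbb{F}\in\{\mathbb{R},\mathbb{C}\}$, let $\Phi=\{\varphi_i\}_{i=1}^M$ be a Parseval frame for $\mathbb{F}^N$ and let $\Psi=\{\psi_i\}_{i=1}^M$ be a Naimark complement of $\Phi$. Let $k\leq\min\{N,M-N\}$. If $v_k(\Phi_K)=c_{M,N,k}$ for every $K\subseteq[M]$ with $|K|=k$, then $v_k(\Psi_K)=c_{M,M-N,k}$ for every $K\subseteq[M]$ with $|K|=k$.
   Context: A Parseval frame for $\mathbb{F}^N$ is a family $\{\varphi_i\}_{i=1}^M\subseteq\mathbb{F}^N$ whose $N\times M$ matrix $\Phi$ (columns $\varphi_i$) satisfies $\Phi\Phi^*=I$. A Naimark complement of $\Phi$ is any $\Psi=\{\psi_i\}_{i=1}^M\subseteq\mathbb{F}^{M-N}$ with $\Psi^*\Psi=I-\Phi^*\Phi$. For $K\subseteq[M]$, $\Phi_K$ is the submatrix of columns indexed by $K$; $v_k(F)=\sqrt{\det(F^*F)}$; and $c_{M,N,k}=\sqrt{{M\choose k}^{-1}{N\choose k}}$. *)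

theory Defs
  imports "Jordan_Normal_Form.Schur_Decomposition" "Jordan_Normal_Form.DL_Submatrix"
begin

text \<open>Frames are represented by their synthesis matrices: an N x M matrix whose
  columns are the frame vectors (indexed 0..M-1). The conjugate transpose is
  the library's mat_adjoint.\<close>

definition parseval_frame :: "nat \<Rightarrow> nat \<Rightarrow> 'a::conjugatable_field mat \<Rightarrow> bool" where
  "parseval_frame N M Phi \<longleftrightarrow> Phi \<in> carrier_mat N M \<and> Phi * mat_adjoint Phi = 1\<^sub>m N"

definition naimark_complement :: "nat \<Rightarrow> nat \<Rightarrow> 'a::conjugatable_field mat \<Rightarrow> 'a mat \<Rightarrow> bool" where
  "naimark_complement N M Phi Psi \<longleftrightarrow> Psi \<in> carrier_mat (M - N) M \<and>
     mat_adjoint Psi * Psi = 1\<^sub>m M - mat_adjoint Phi * Phi"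

definition cols_sub :: "'a mat \<Rightarrow> nat set \<Rightarrow> 'a mat" where
  "cols_sub A K = submatrix A {0..<dim_row A} K"

text \<open>For complex matrices det(F^* F) is a nonnegative real number (a complex number
  with zero imaginary part), so we take the square root of its real part.\<close>
definition vol_r :: "real mat \<Rightarrow> real" where
  "vol_r F = sqrt (det (mat_adjoint F * F))"

definition vol_c :: "complex mat \<Rightarrow> real" where
  "vol_c F = sqrt (Re (det (mat_adjoint F * F)))"

definition cMNk :: "nat \<Rightarrow> nat \<Rightarrow> nat \<Rightarrow> real" where
  "cMNk M N k = sqrt (real (N choose k) / real (M choose k))"

end

theory Submission imports Defs "HOL-Combinatorics.Permutations" begin



definition dt :: "nat set \<Rightarrow> (nat \<Rightarrow> nat \<Rightarrow> 'a::comm_ring_1) \<Rightarrow> 'a" where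
  "dt S a = (\<Sum>p\<in>{p. p permutes S}. of_int (sign p) * (\<Prod>i\<in>S. a i (p i)))"

lemma dt_cong:
  assumes "\<And>i j. i \<in> S \<Longrightarrow> j \<in> S \<Longrightarrow> a i j = b i j"
  shows "dt S a = dt S b"
  unfolding dt_def
  by (intro sum.cong refl arg_cong[where f="\<lambda>x. _ * x"] prod.cong) (auto simp: assms permutes_in_image)

lemma dt_empty[simp]: "dt {} a = 1"
  by (simp add: dt_def permutes_empty)


lemma pick_bij:
  assumes "finite I"
  shows "bij_betw (pick I) {0..<card I} I"
proof -
  have inj: "inj_on (pick I) {0..<card I}"
  proof (rule inj_onI)
    fix x y assume "x \<in> {0..<card I}" "y \<in> {0..<card I}" "pick I x = pick I y"
    then show "x = y"
      by (metis atLeastLessThan_iff linorder_neqE_nat pick_mono_le less_irrefl)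
  qed
  have sub: "pick I ` {0..<card I} \<subseteq> I" using pick_in_set_le by auto
  have "card (pick I ` {0..<card I}) = card I" using card_image[OF inj] by simp
  then have "pick I ` {0..<card I} = I" using card_subset_eq[OF assms sub] by simp
  then show ?thesis using inj by (simp add: bij_betw_def)
qed

lemma det_submatrix_dt:
  assumes "I \<subseteq> {0..<dim_row A}" "I \<subseteq> {0..<dim_col A}"
  shows "det (submatrix A I I) = dt I (\<lambda>i j. A $$ (i,j))"
proof -
  have fin: "finite I" using assms finite_subset by blast
  define m where "m = card I"
  have r: "{i. i<dim_row A \<and> i\<in>I} = I" "{i. i<dim_col A \<and> i\<in>I} = I" using assms by auto
  have car: "submatrix A I I \<in> carrier_mat m m" unfolding carrier_mat_def m_def by (simp add: dim_submatrix r)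
  define f where "f = pick I"
  have bij: "bij_betw f {0..<m} I" unfolding f_def m_def by (rule pick_bij[OF fin])
  have inj: "inj_on f {0..<m}" using bij bij_betw_imp_inj_on by blast
  define g where "g = inv_into {0..<m} f"
  have gf: "\<And>x. x \<in> {0..<m} \<Longrightarrow> g (f x) = x" unfolding g_def using inj by (simp add: inv_into_f_f)
  have bijg: "bij_betw g I {0..<m}" unfolding g_def by (rule bij_betw_inv_into[OF bij])
  have fg: "\<And>x. x \<in> I \<Longrightarrow> f (g x) = x" unfolding g_def using bij by (simp add: bij_betw_inv_into_right)
  have "det (submatrix A I I) = (\<Sum>p\<in>{p. p permutes {0..<m}}. signof p * (\<Prod>i=0..<m. submatrix A I I $$ (i, p i)))"
    by (rule det_def'[OF car])
  also have "\<dots> = (\<Sum>p\<in>{p. p permutes {0..<m}}. of_int (sign (map_permutation {0..<m} f p)) * (\<Prod>i\<in>I. A $$ (i, map_permutation {0..<m} f p i)))"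
  proof (rule sum.cong[OF refl])
    fix p assume "p \<in> {p. p permutes {0..<m}}"
    then have p: "p permutes {0..<m}" by simp
    have "(\<Prod>i=0..<m. submatrix A I I $$ (i, p i)) = (\<Prod>i=0..<m. A $$ (f i, f (p i)))"
    proof (rule prod.cong[OF refl])
      fix i assume "i \<in> {0..<m}"
      then have "p i < m" "i < m" using p permutes_in_image by fastforce+
      then show "submatrix A I I $$ (i, p i) = A $$ (f i, f (p i))"
        unfolding f_def by (subst submatrix_index) (auto simp: r m_def)
    qed
    also have "\<dots> = (\<Prod>i=0..<m. A $$ (f i, map_permutation {0..<m} f p (f i)))"
      using map_permutation_apply[OF inj] by simp
    also have "\<dots> = (\<Prod>i\<in>I. A $$ (i, map_permutation {0..<m} f p i))"
      using prod.reindex_bij_betw[OF bij, of "\<lambda>i. A $$ (i, map_permutation {0..<m} f p i)"] by simp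
    finally show "signof p * (\<Prod>i=0..<m. submatrix A I I $$ (i, p i)) = of_int (sign (map_permutation {0..<m} f p)) * (\<Prod>i\<in>I. A $$ (i, map_permutation {0..<m} f p i))"
      using sign_map_permutation[OF inj p] by simp
  qed
  also have "\<dots> = dt I (\<lambda>i j. A $$ (i,j))"
    unfolding dt_def
  proof (rule sum.reindex_bij_witness[where i="map_permutation I g" and j="map_permutation {0..<m} f"])
    fix p assume "p \<in> {p. p permutes {0..<m}}"
    then have p: "p permutes {0..<m}" by simp
    show "map_permutation I g (map_permutation {0..<m} f p) = p" by (rule map_permutation_compose_inv[OF bij p gf])
    show "map_permutation {0..<m} f p \<in> {p. p permutes I}" using map_permutation_permutes[OF bij p] by simp
  next
    fix q assume "q \<in> {p. p permutes I}"
    then have q: "q permutes I" by simp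
    show "map_permutation {0..<m} f (map_permutation I g q) = q" by (rule map_permutation_compose_inv[OF bijg q fg])
    show "map_permutation I g q \<in> {p. p permutes {0..<m}}" using map_permutation_permutes[OF bijg q] by simp
  qed simp
  finally show ?thesis .
qed


lemma transpose_idem: "Transposition.transpose x y \<circ> Transposition.transpose x y = id"
  by (simp add: fun_eq_iff)

lemma dt_equal_rows:
  fixes a :: "nat \<Rightarrow> nat \<Rightarrow> 'a::field_char_0"
  assumes fin: "finite S" and xy: "x \<in> S" "y \<in> S" "x \<noteq> y" and eq: "\<And>c. a x c = a y c"
  shows "dt S a = 0"
proof -
  define \<tau> where "\<tau> = Transposition.transpose x y"
  have a\<tau>: "a (\<tau> i) c = a i c" for i c unfolding \<tau>_def using eq
    by (cases "i = x"; cases "i = y") auto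
  have \<tau>S: "\<tau> permutes S" unfolding \<tau>_def using xy by (simp add: permutes_swap_id)
  have bij\<tau>: "bij_betw \<tau> S S" using \<tau>S permutes_imp_bij by blast
  have \<tau>\<tau>: "\<tau> \<circ> \<tau> = id" unfolding \<tau>_def by (rule transpose_idem)
  define F where "F = (\<lambda>p. of_int (sign p) * (\<Prod>i\<in>S. a i (p i)) :: 'a)"
  have "dt S a = sum F {p. p permutes S}" unfolding dt_def F_def ..
  also have "\<dots> = sum (\<lambda>p. F (p \<circ> \<tau>)) {p. p permutes S}"
  proof (rule sum.reindex_bij_witness[where i="\<lambda>p. p \<circ> \<tau>" and j="\<lambda>p. p \<circ> \<tau>"])
    fix p assume "p \<in> {p. p permutes S}"
    then have p: "p permutes S" by simp
    show "p \<circ> \<tau> \<circ> \<tau> = p" by (simp add: o_assoc[symmetric] \<tau>\<tau>)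
    show "p \<circ> \<tau> \<in> {p. p permutes S}" using permutes_compose[OF \<tau>S p] by simp
    show "F (p \<circ> \<tau> \<circ> \<tau>) = F p" by (simp add: o_assoc[symmetric] \<tau>\<tau>)
  next
    fix p assume "p \<in> {p. p permutes S}"
    then have p: "p permutes S" by simp
    show "p \<circ> \<tau> \<circ> \<tau> = p" by (simp add: o_assoc[symmetric] \<tau>\<tau>)
    show "p \<circ> \<tau> \<in> {p. p permutes S}" using permutes_compose[OF \<tau>S p] by simp
  qed
  also have "\<dots> = sum (\<lambda>p. - F p) {p. p permutes S}"
  proof (rule sum.cong[OF refl])
    fix p assume "p \<in> {p. p permutes S}" then have p: "p permutes S" by simp
    have "sign (p \<circ> \<tau>) = - sign p"
      using sign_compose[OF permutes_imp_permutation[OF fin p] permutes_imp_permutation[OF fin \<tau>S]] xy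
      by (simp add: \<tau>_def sign_swap_id)
    moreover have "(\<Prod>i\<in>S. a i ((p \<circ> \<tau>) i)) = (\<Prod>i\<in>S. a i (p i))"
    proof -
      have "(\<Prod>i\<in>S. a i ((p \<circ> \<tau>) i)) = (\<Prod>i\<in>S. a (\<tau> i) (p (\<tau> i)))" using a\<tau> by simp
      also have "\<dots> = (\<Prod>i\<in>S. a i (p i))"
        using prod.reindex_bij_betw[OF bij\<tau>, of "\<lambda>i. a i (p i)"] by simp
      finally show ?thesis .
    qed
    ultimately show "F (p \<circ> \<tau>) = - F p" unfolding F_def by simp
  qed
  finally have "dt S a = - dt S a" by (simp add: sum_negf dt_def F_def)
  then show ?thesis by simp
qed

definition upd :: "(nat \<Rightarrow> nat \<Rightarrow> 'a::zero_neq_one) \<Rightarrow> nat \<Rightarrow> nat \<Rightarrow> nat \<Rightarrow> nat \<Rightarrow> 'a" where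
  "upd a x y = (\<lambda>r c. if r = x then (if c = y then 1 else 0) else a r c)"

lemma dt_row_expand:
  fixes a :: "nat \<Rightarrow> nat \<Rightarrow> 'a::comm_ring_1"
  assumes fin: "finite S" and x: "x \<in> S"
  shows "dt S (\<lambda>r c. if r = x then v c else a r c) =
    (\<Sum>p\<in>{p. p permutes S}. of_int (sign p) * v (p x) * (\<Prod>i\<in>S-{x}. a i (p i)))"
  unfolding dt_def
proof (rule sum.cong[OF refl])
  fix p
  have "(\<Prod>i\<in>S. (if i = x then v (p i) else a i (p i))) = v (p x) * (\<Prod>i\<in>S-{x}. (if i = x then v (p i) else a i (p i)))"
    using prod.remove[OF fin x, of "\<lambda>i. if i = x then v (p i) else a i (p i)"] by simp
  also have "(\<Prod>i\<in>S-{x}. (if i = x then v (p i) else a i (p i))) = (\<Prod>i\<in>S-{x}. a i (p i))"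
    by (rule prod.cong) auto
  finally show "of_int (sign p) * (\<Prod>i\<in>S. (\<lambda>r c. if r = x then v c else a r c) i (p i)) =
     of_int (sign p) * v (p x) * (\<Prod>i\<in>S-{x}. a i (p i))" by simp
qed

lemma dt_upd_sum:
  fixes a :: "nat \<Rightarrow> nat \<Rightarrow> 'a::comm_ring_1"
  assumes fin: "finite S" and x: "x \<in> S"
  shows "(\<Sum>y\<in>S. w y * dt S (upd a x y)) = dt S (\<lambda>r c. if r = x then w c else a r c)"
proof -
  have e: "dt S (upd a x y) = (\<Sum>p\<in>{p. p permutes S}. of_int (sign p) * (if p x = y then 1 else 0) * (\<Prod>i\<in>S-{x}. a i (p i)))" for y
  proof -
    have "upd a x y = (\<lambda>r c. if r = x then (if c = y then 1 else 0) else a r c)" unfolding upd_def ..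
    then show ?thesis using dt_row_expand[OF fin x, of "\<lambda>c. if c = y then 1 else 0" a] by simp
  qed
  have "(\<Sum>y\<in>S. w y * dt S (upd a x y)) = (\<Sum>y\<in>S. \<Sum>p\<in>{p. p permutes S}. w y * (of_int (sign p) * (if p x = y then 1 else 0) * (\<Prod>i\<in>S-{x}. a i (p i))))"
    unfolding e by (simp add: sum_distrib_left)
  also have "\<dots> = (\<Sum>p\<in>{p. p permutes S}. \<Sum>y\<in>S. w y * (of_int (sign p) * (if p x = y then 1 else 0) * (\<Prod>i\<in>S-{x}. a i (p i))))"
    by (rule sum.swap)
  also have "\<dots> = (\<Sum>p\<in>{p. p permutes S}. of_int (sign p) * w (p x) * (\<Prod>i\<in>S-{x}. a i (p i)))"
  proof (rule sum.cong[OF refl])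
    fix p assume "p \<in> {p. p permutes S}"
    then have px: "p x \<in> S" using x permutes_in_image by fastforce
    have "(\<Sum>y\<in>S. w y * (of_int (sign p) * (if p x = y then 1 else 0) * (\<Prod>i\<in>S-{x}. a i (p i))))
       = (\<Sum>y\<in>S. if p x = y then w y * (of_int (sign p) * (\<Prod>i\<in>S-{x}. a i (p i))) else 0)"
      by (rule sum.cong) auto
    also have "\<dots> = w (p x) * (of_int (sign p) * (\<Prod>i\<in>S-{x}. a i (p i)))"
      using sum.delta'[OF fin, of "p x" "\<lambda>y. w y * (of_int (sign p) * (\<Prod>i\<in>S-{x}. a i (p i)))"] px by simp
    finally show "(\<Sum>y\<in>S. w y * (of_int (sign p) * (if p x = y then 1 else 0) * (\<Prod>i\<in>S-{x}. a i (p i)))) =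
         of_int (sign p) * w (p x) * (\<Prod>i\<in>S-{x}. a i (p i))" by (simp add: algebra_simps)
  qed
  also have "\<dots> = dt S (\<lambda>r c. if r = x then w c else a r c)"
    using dt_row_expand[OF fin x, of w a] by simp
  finally show ?thesis .
qed

lemma adj_identity:
  fixes a :: "nat \<Rightarrow> nat \<Rightarrow> 'a::field_char_0"
  assumes fin: "finite S" and x: "x \<in> S" and r: "r \<in> S"
  shows "(\<Sum>y\<in>S. a r y * dt S (upd a x y)) = (if r = x then dt S a else 0)"
proof -
  have "(\<Sum>y\<in>S. a r y * dt S (upd a x y)) = dt S (\<lambda>i c. if i = x then a r c else a i c)"
    by (rule dt_upd_sum[OF fin x])
  also have "\<dots> = (if r = x then dt S a else 0)"
  proof (cases "r = x")
    case True
    have "(\<lambda>i c. if i = x then a r c else a i c) = a" using True by (auto simp: fun_eq_iff)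
    then show ?thesis using True by simp
  next
    case False
    show ?thesis using False
      by (simp, intro dt_equal_rows[OF fin x r not_sym[OF False]]) simp
  qed
  finally show ?thesis .
qed


lemma permutes_insert_fix:
  assumes "i \<notin> S"
  shows "(p permutes insert i S \<and> p i = i) \<longleftrightarrow> p permutes S"
proof
  assume h: "p permutes S"
  have "p permutes insert i S" using permutes_subset[OF h, of "insert i S"] by blast
  moreover have "p i = i" using permutes_not_in[OF h assms] .
  ultimately show "p permutes insert i S \<and> p i = i" ..
next
  assume h: "p permutes insert i S \<and> p i = i"
  show "p permutes S"
  proof (rule permutes_superset[of p "insert i S"])
    show "p permutes insert i S" using h by simp
    fix x assume "x \<in> insert i S - S"
    then have "x = i" by auto
    then show "p x = x" using h by simp
  qed
qed

lemma dt_insert: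
  fixes a :: "nat \<Rightarrow> nat \<Rightarrow> 'a::comm_ring_1"
  assumes fin: "finite S" and iS: "i \<notin> S"
  shows "dt (insert i S) a = a i i * dt S a - (\<Sum>x\<in>S. \<Sum>y\<in>S. a x i * a i y * dt S (upd a x y))"
proof -
  let ?T = "insert i S"
  define F where "F = (\<lambda>p. of_int (sign p) * (\<Prod>j\<in>?T. a j (p j)) :: 'a)"
  define G where "G = (\<lambda>(x,q). a x i * (of_int (sign q) * a i (q x) * (\<Prod>j\<in>S-{x}. a j (q j))) :: 'a)"
  have finT: "finite ?T" using fin by simp
  have split: "{p. p permutes ?T} = {p. p permutes ?T \<and> p i = i} \<union> {p. p permutes ?T \<and> p i \<noteq> i}" by auto
  have fins: "finite {p. p permutes ?T \<and> p i = i}" "finite {p. p permutes ?T \<and> p i \<noteq> i}"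
    using finite_permutations[OF finT] by (auto intro: finite_subset)
  have "dt ?T a = sum F {p. p permutes ?T}" unfolding dt_def F_def ..
  also have "\<dots> = sum F {p. p permutes ?T \<and> p i = i} + sum F {p. p permutes ?T \<and> p i \<noteq> i}"
    unfolding split by (rule sum.union_disjoint[OF fins]) auto
  finally have e1: "dt ?T a = sum F {p. p permutes ?T \<and> p i = i} + sum F {p. p permutes ?T \<and> p i \<noteq> i}" .
  have P0: "sum F {p. p permutes ?T \<and> p i = i} = a i i * dt S a"
  proof -
    have "{p. p permutes ?T \<and> p i = i} = {p. p permutes S}" using permutes_insert_fix[OF iS] by blast
    moreover have "F p = a i i * (of_int (sign p) * (\<Prod>j\<in>S. a j (p j)))" if "p permutes S" for p
    proof -
      have "p i = i" using that iS permutes_not_in by metis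
      then show ?thesis unfolding F_def using prod.insert[OF fin iS, of "\<lambda>j. a j (p j)"] by (simp add: algebra_simps)
    qed
    ultimately show ?thesis unfolding dt_def by (simp add: sum_distrib_left)
  qed
  have R: "(\<Sum>x\<in>S. \<Sum>y\<in>S. a x i * a i y * dt S (upd a x y)) = sum G (S \<times> {q. q permutes S})"
  proof -
    have "(\<Sum>y\<in>S. a x i * a i y * dt S (upd a x y)) = (\<Sum>q\<in>{q. q permutes S}. G (x,q))" if x: "x \<in> S" for x
    proof -
      have "(\<Sum>y\<in>S. a x i * a i y * dt S (upd a x y)) = a x i * (\<Sum>y\<in>S. a i y * dt S (upd a x y))"
        by (simp add: sum_distrib_left mult.assoc)
      also have "\<dots> = a x i * dt S (\<lambda>r c. if r = x then a i c else a r c)"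
        using dt_upd_sum[OF fin x, of "\<lambda>c. a i c" a] by simp
      also have "\<dots> = a x i * (\<Sum>q\<in>{q. q permutes S}. of_int (sign q) * a i (q x) * (\<Prod>j\<in>S-{x}. a j (q j)))"
        using dt_row_expand[OF fin x, of "\<lambda>c. a i c" a] by simp
      finally show ?thesis unfolding G_def by (simp add: sum_distrib_left)
    qed
    then have "(\<Sum>x\<in>S. \<Sum>y\<in>S. a x i * a i y * dt S (upd a x y)) = (\<Sum>x\<in>S. \<Sum>q\<in>{q. q permutes S}. G (x,q))"
      by simp
    also have "\<dots> = sum G (S \<times> {q. q permutes S})"
      by (rule sum.cartesian_product'[symmetric])
    finally show ?thesis .
  qed
  have P1: "sum F {p. p permutes ?T \<and> p i \<noteq> i} = sum (\<lambda>z. - G z) (S \<times> {q. q permutes S})"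
  proof (rule sum.reindex_bij_witness[where j="\<lambda>(x,q). Transposition.transpose i (q x) \<circ> q"
        and i="\<lambda>p. (Hilbert_Choice.inv p i, Transposition.transpose i (p i) \<circ> p)", symmetric])
    fix z assume "z \<in> S \<times> {q. q permutes S}"
    then obtain x q where z: "z = (x,q)" and x: "x \<in> S" and q: "q permutes S" by auto
    define y where "y = q x"
    have y: "y \<in> S" unfolding y_def using x q permutes_in_image by fastforce
    have yi: "y \<noteq> i" using y iS by auto
    have qi: "q i = i" using q iS permutes_not_in by metis
    define \<tau> where "\<tau> = Transposition.transpose i y"
    have qT: "q permutes ?T" using q permutes_subset by blast
    have \<tau>T: "\<tau> permutes ?T" unfolding \<tau>_def using y by (simp add: permutes_swap_id)
    define p where "p = \<tau> \<circ> q"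
    have pT: "p permutes ?T" unfolding p_def by (rule permutes_compose[OF qT \<tau>T])
    have pi: "p i = y" unfolding p_def \<tau>_def using qi by simp
    have px: "p x = i" unfolding p_def \<tau>_def y_def by simp
    have ipi: "Hilbert_Choice.inv p i = x" using permutes_inv_eq[OF pT] px by simp
    have \<tau>p0: "\<tau> \<circ> p = q"
      unfolding p_def \<tau>_def by (simp add: fun_eq_iff)
    have \<tau>p: "Transposition.transpose i (p i) \<circ> p = q"
      using \<tau>p0 pi \<tau>_def by simp
    have jz: "(\<lambda>(x,q). Transposition.transpose i (q x) \<circ> q) z = p" unfolding z p_def \<tau>_def y_def by simp
    show "(\<lambda>p. (Hilbert_Choice.inv p i, Transposition.transpose i (p i) \<circ> p)) ((\<lambda>(x,q). Transposition.transpose i (q x) \<circ> q) z) = z"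
      unfolding jz using ipi \<tau>p z by simp
    show "(\<lambda>(x,q). Transposition.transpose i (q x) \<circ> q) z \<in> {p. p permutes ?T \<and> p i \<noteq> i}"
      unfolding jz using pT pi yi by simp
    have sg: "sign p = - sign q"
      unfolding p_def using sign_compose[OF permutes_imp_permutation[OF finT \<tau>T] permutes_imp_permutation[OF finT qT]] yi
      by (simp add: \<tau>_def sign_swap_id)
    have pr: "(\<Prod>j\<in>?T. a j (p j)) = a i y * (a x i * (\<Prod>j\<in>S-{x}. a j (q j)))"
    proof -
      have "(\<Prod>j\<in>?T. a j (p j)) = a i (p i) * (\<Prod>j\<in>S. a j (p j))" using prod.insert[OF fin iS] by simp
      also have "(\<Prod>j\<in>S. a j (p j)) = a x (p x) * (\<Prod>j\<in>S-{x}. a j (p j))" using prod.remove[OF fin x] by simp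
      also have "(\<Prod>j\<in>S-{x}. a j (p j)) = (\<Prod>j\<in>S-{x}. a j (q j))"
      proof (rule prod.cong[OF refl])
        fix j assume j: "j \<in> S - {x}"
        then have "q j \<in> S" using q permutes_in_image by fastforce
        moreover have "q j \<noteq> y" unfolding y_def using j permutes_inj[OF q] by (auto dest: injD)
        ultimately have "\<tau> (q j) = q j" unfolding \<tau>_def using iS by (auto simp: transpose_def)
        then show "a j (p j) = a j (q j)" unfolding p_def by simp
      qed
      finally show ?thesis using pi px by simp
    qed
    have "F p = - G z" unfolding F_def G_def z using sg pr by (simp add: y_def algebra_simps)
    then show "F ((\<lambda>(x,q). Transposition.transpose i (q x) \<circ> q) z) = - G z"
      using jz by simp
  next
    fix p assume "p \<in> {p. p permutes ?T \<and> p i \<noteq> i}"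
    then have pT: "p permutes ?T" and pi: "p i \<noteq> i" by auto
    define y where "y = p i"
    have yT: "y \<in> ?T" unfolding y_def using permutes_in_image[OF pT, of i] by simp
    then have y: "y \<in> S" using pi y_def by auto
    define x where "x = Hilbert_Choice.inv p i"
    have px: "p x = i" unfolding x_def using permutes_inverses(1)[OF pT] by simp
    have xT: "x \<in> ?T" unfolding x_def using permutes_in_image[OF permutes_inv[OF pT]] by simp
    have x: "x \<in> S" using xT px pi by auto
    define \<tau> where "\<tau> = Transposition.transpose i y"
    have \<tau>T: "\<tau> permutes ?T" unfolding \<tau>_def using y by (simp add: permutes_swap_id)
    define q where "q = \<tau> \<circ> p"
    have qT: "q permutes ?T" unfolding q_def by (rule permutes_compose[OF pT \<tau>T])
    have qi: "q i = i" unfolding q_def \<tau>_def y_def by simp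
    have q: "q permutes S" using permutes_insert_fix[OF iS] qT qi by blast
    have qx: "q x = y" unfolding q_def \<tau>_def using px by simp
    show "(Hilbert_Choice.inv p i, Transposition.transpose i (p i) \<circ> p) \<in> S \<times> {q. q permutes S}"
      using x q unfolding x_def q_def \<tau>_def y_def by simp
    show "(\<lambda>(x,q). Transposition.transpose i (q x) \<circ> q) (Hilbert_Choice.inv p i, Transposition.transpose i (p i) \<circ> p) = p"
      using qx unfolding x_def[symmetric] q_def[symmetric] \<tau>_def[symmetric] y_def[symmetric]
      by (simp add: q_def \<tau>_def fun_eq_iff)
  qed
  show ?thesis unfolding e1 P0 P1 R by (simp add: sum_negf)
qed


lemma sum_border:
  fixes a :: "nat \<Rightarrow> nat \<Rightarrow> 'a::field_char_0"
  assumes J: "J \<subseteq> {0..<M}"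
    and idem: "\<And>x y. x < M \<Longrightarrow> y < M \<Longrightarrow> (\<Sum>z\<in>{0..<M}. a x z * a z y) = a x y"
    and tr: "(\<Sum>i\<in>{0..<M}. a i i) = of_nat N"
  shows "(\<Sum>i\<in>{0..<M}-J. dt (insert i J) a) = (of_nat N - of_nat (card J)) * dt J a"
proof -
  have finJ: "finite J" using J finite_subset by blast
  define D where "D = dt J a"
  define C where "C = {0..<M} - J"
  define ad where "ad = (\<lambda>x y. dt J (upd a x y))"
  have "(\<Sum>i\<in>C. dt (insert i J) a) = (\<Sum>i\<in>C. a i i * D - (\<Sum>x\<in>J. \<Sum>y\<in>J. a x i * a i y * ad x y))"
    by (rule sum.cong[OF refl]) (auto simp: C_def D_def ad_def dt_insert[OF finJ])
  also have "\<dots> = (\<Sum>i\<in>C. a i i) * D - (\<Sum>i\<in>C. \<Sum>x\<in>J. \<Sum>y\<in>J. a x i * a i y * ad x y)"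
    by (simp add: sum_subtractf sum_distrib_right)
  also have "(\<Sum>i\<in>C. \<Sum>x\<in>J. \<Sum>y\<in>J. a x i * a i y * ad x y) = (\<Sum>x\<in>J. \<Sum>i\<in>C. \<Sum>y\<in>J. a x i * a i y * ad x y)"
    by (rule sum.swap)
  also have "\<dots> = (\<Sum>x\<in>J. \<Sum>y\<in>J. \<Sum>i\<in>C. a x i * a i y * ad x y)"
    by (rule sum.cong[OF refl], rule sum.swap)
  also have "\<dots> = (\<Sum>x\<in>J. \<Sum>y\<in>J. ad x y * (\<Sum>i\<in>C. a x i * a i y))"
    by (simp add: sum_distrib_left ac_simps)
  finally have e1: "(\<Sum>i\<in>C. dt (insert i J) a) = (\<Sum>i\<in>C. a i i) * D - (\<Sum>x\<in>J. \<Sum>y\<in>J. ad x y * (\<Sum>i\<in>C. a x i * a i y))" .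
  have split: "\<And>f. sum f {0..<M} = sum f C + sum f J"
    unfolding C_def using sum.subset_diff[OF J] by simp
  have trC: "(\<Sum>i\<in>C. a i i) = of_nat N - (\<Sum>i\<in>J. a i i)"
    using split[of "\<lambda>i. a i i"] tr by (simp add: algebra_simps)
  have inner: "(\<Sum>i\<in>C. a x i * a i y) = a x y - (\<Sum>i\<in>J. a x i * a i y)" if "x \<in> J" "y \<in> J" for x y
  proof -
    have "x < M" "y < M" using that J by auto
    then show ?thesis using split[of "\<lambda>i. a x i * a i y"] idem[of x y] by (simp add: algebra_simps)
  qed
  have "(\<Sum>x\<in>J. \<Sum>y\<in>J. ad x y * (\<Sum>i\<in>C. a x i * a i y))
      = (\<Sum>x\<in>J. \<Sum>y\<in>J. a x y * ad x y) - (\<Sum>x\<in>J. \<Sum>y\<in>J. ad x y * (\<Sum>i\<in>J. a x i * a i y))"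
  proof -
    have "(\<Sum>x\<in>J. \<Sum>y\<in>J. ad x y * (\<Sum>i\<in>C. a x i * a i y))
      = (\<Sum>x\<in>J. \<Sum>y\<in>J. a x y * ad x y - ad x y * (\<Sum>i\<in>J. a x i * a i y))"
      by (intro sum.cong refl) (simp add: inner algebra_simps)
    then show ?thesis by (simp add: sum_subtractf)
  qed
  also have "(\<Sum>x\<in>J. \<Sum>y\<in>J. a x y * ad x y) = (\<Sum>x\<in>J. D)"
    by (rule sum.cong[OF refl]) (simp add: adj_identity[OF finJ] ad_def D_def)
  also have "(\<Sum>x\<in>J. \<Sum>y\<in>J. ad x y * (\<Sum>i\<in>J. a x i * a i y)) = (\<Sum>x\<in>J. \<Sum>i\<in>J. a x i * (\<Sum>y\<in>J. a i y * ad x y))"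
  proof (rule sum.cong[OF refl])
    fix x assume "x \<in> J"
    have "(\<Sum>y\<in>J. ad x y * (\<Sum>i\<in>J. a x i * a i y)) = (\<Sum>y\<in>J. \<Sum>i\<in>J. a x i * (a i y * ad x y))"
      by (simp add: sum_distrib_left ac_simps)
    also have "\<dots> = (\<Sum>i\<in>J. \<Sum>y\<in>J. a x i * (a i y * ad x y))" by (rule sum.swap)
    also have "\<dots> = (\<Sum>i\<in>J. a x i * (\<Sum>y\<in>J. a i y * ad x y))" by (simp add: sum_distrib_left)
    finally show "(\<Sum>y\<in>J. ad x y * (\<Sum>i\<in>J. a x i * a i y)) = (\<Sum>i\<in>J. a x i * (\<Sum>y\<in>J. a i y * ad x y))" .
  qed
  also have "\<dots> = (\<Sum>x\<in>J. \<Sum>i\<in>J. a x i * (if i = x then D else 0))"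
    by (intro sum.cong refl) (simp add: adj_identity[OF finJ] ad_def D_def)
  also have "\<dots> = (\<Sum>x\<in>J. a x x * D)"
  proof (rule sum.cong[OF refl])
    fix x assume x: "x \<in> J"
    have "(\<Sum>i\<in>J. a x i * (if i = x then D else 0)) = (\<Sum>i\<in>J. if i = x then a x i * D else 0)"
      by (rule sum.cong) auto
    also have "\<dots> = a x x * D" using sum.delta[OF finJ, of x "\<lambda>i. a x i * D"] x by simp
    finally show "(\<Sum>i\<in>J. a x i * (if i = x then D else 0)) = a x x * D" .
  qed
  finally have e2: "(\<Sum>x\<in>J. \<Sum>y\<in>J. ad x y * (\<Sum>i\<in>C. a x i * a i y)) = of_nat (card J) * D - (\<Sum>x\<in>J. a x x) * D"
    by (simp add: sum_distrib_right)
  show ?thesis unfolding C_def[symmetric] D_def[symmetric] e1 e2 trC by (simp add: algebra_simps)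
qed

lemma permutes_fix_outside:
  assumes "X \<subseteq> S"
  shows "{p. p permutes S \<and> (\<forall>s\<in>S-X. p s = s)} = {p. p permutes X}"
proof -
  have "(p permutes S \<and> (\<forall>s\<in>S-X. p s = s)) \<longleftrightarrow> p permutes X" for p
  proof
    assume "p permutes S \<and> (\<forall>s\<in>S-X. p s = s)"
    then show "p permutes X" using permutes_superset[of p S X] by auto
  next
    assume p: "p permutes X"
    show "p permutes S \<and> (\<forall>s\<in>S-X. p s = s)"
      using permutes_subset[OF p assms] permutes_not_in[OF p] by auto
  qed
  then show ?thesis by blast
qed

lemma dt_one_minus:
  fixes a :: "nat \<Rightarrow> nat \<Rightarrow> 'a::comm_ring_1"
  assumes fin: "finite S"
  shows "dt S (\<lambda>r c. (if r = c then 1 else 0) - a r c) = (\<Sum>X\<in>Pow S. (-1) ^ card X * dt X a)"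
proof -
  have finP: "finite {p. p permutes S}" using finite_permutations[OF fin] .
  have prodeq: "(\<Prod>s\<in>S. (if s = p s then 1 else 0) - a s (p s)) =
      (\<Sum>X\<in>Pow S. (if (\<forall>s\<in>S-X. p s = s) then (-1) ^ card X * (\<Prod>s\<in>X. a s (p s)) else 0))" for p
  proof -
    have "(\<Prod>s\<in>S. (if s = p s then 1 else 0) - a s (p s)) = (\<Prod>s\<in>S. (- a s (p s)) + (if s = p s then 1 else 0))"
      by (simp add: algebra_simps)
    also have "\<dots> = (\<Sum>X\<in>Pow S. (\<Prod>s\<in>X. - a s (p s)) * (\<Prod>s\<in>S-X. (if s = p s then 1 else 0)))"
      by (rule prod_add[OF fin])
    also have "\<dots> = (\<Sum>X\<in>Pow S. (if (\<forall>s\<in>S-X. p s = s) then (-1) ^ card X * (\<Prod>s\<in>X. a s (p s)) else 0))"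
    proof (rule sum.cong[OF refl])
      fix X assume X: "X \<in> Pow S"
      have fX: "finite (S - X)" using fin by simp
      have "(\<Prod>s\<in>S-X. (if s = p s then 1 else 0)) = (if (\<forall>s\<in>S-X. p s = s) then 1 else (0::'a))"
      proof (cases "\<forall>s\<in>S-X. p s = s")
        case True then show ?thesis by (simp add: eq_commute)
      next
        case False
        then obtain s where "s \<in> S - X" "p s \<noteq> s" by blast
        then have "(\<Prod>s\<in>S-X. (if s = p s then 1 else 0)) = (0::'a)"
          by (intro prod_zero[OF fX] bexI[of _ s]) auto
        then show ?thesis using False by simp
      qed
      then show "(\<Prod>s\<in>X. - a s (p s)) * (\<Prod>s\<in>S-X. (if s = p s then 1 else 0)) =
          (if (\<forall>s\<in>S-X. p s = s) then (-1) ^ card X * (\<Prod>s\<in>X. a s (p s)) else 0)"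
        by (simp add: prod_uminus)
    qed
    finally show ?thesis .
  qed
  have "dt S (\<lambda>r c. (if r = c then 1 else 0) - a r c) =
     (\<Sum>p\<in>{p. p permutes S}. \<Sum>X\<in>Pow S. of_int (sign p) * (if (\<forall>s\<in>S-X. p s = s) then (-1) ^ card X * (\<Prod>s\<in>X. a s (p s)) else 0))"
    unfolding dt_def prodeq by (simp add: sum_distrib_left)
  also have "\<dots> = (\<Sum>X\<in>Pow S. \<Sum>p\<in>{p. p permutes S}. of_int (sign p) * (if (\<forall>s\<in>S-X. p s = s) then (-1) ^ card X * (\<Prod>s\<in>X. a s (p s)) else 0))"
    by (rule sum.swap)
  also have "\<dots> = (\<Sum>X\<in>Pow S. (-1) ^ card X * dt X a)"
  proof (rule sum.cong[OF refl])
    fix X assume X: "X \<in> Pow S"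
    have "(\<Sum>p\<in>{p. p permutes S}. of_int (sign p) * (if (\<forall>s\<in>S-X. p s = s) then (-1) ^ card X * (\<Prod>s\<in>X. a s (p s)) else 0))
      = (\<Sum>p\<in>{p. p permutes S}. if (\<forall>s\<in>S-X. p s = s) then (-1) ^ card X * (of_int (sign p) * (\<Prod>s\<in>X. a s (p s))) else 0)"
      by (rule sum.cong) (auto simp: algebra_simps)
    also have "\<dots> = (\<Sum>p\<in>{p \<in> {p. p permutes S}. (\<forall>s\<in>S-X. p s = s)}. (-1) ^ card X * (of_int (sign p) * (\<Prod>s\<in>X. a s (p s))))"
      by (rule sum.inter_filter[OF finP, symmetric])
    also have "{p \<in> {p. p permutes S}. (\<forall>s\<in>S-X. p s = s)} = {p. p permutes X}"
      using permutes_fix_outside[of X S] X by auto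
    finally show "(\<Sum>p\<in>{p. p permutes S}. of_int (sign p) * (if (\<forall>s\<in>S-X. p s = s) then (-1) ^ card X * (\<Prod>s\<in>X. a s (p s)) else 0))
      = (-1) ^ card X * dt X a" unfolding dt_def by (simp add: sum_distrib_left)
  qed
  finally show ?thesis .
qed


lemma sum_pow_card:
  fixes h :: "nat \<Rightarrow> real"
  assumes fin: "finite K"
  shows "(\<Sum>X\<in>Pow K. h (card X)) = (\<Sum>j\<le>card K. real (card K choose j) * h j)"
proof -
  have img: "card ` Pow K \<subseteq> {..card K}" using card_mono[OF fin] by auto
  have "(\<Sum>X\<in>Pow K. h (card X)) = (\<Sum>j\<in>{..card K}. \<Sum>X\<in>{X. X \<in> Pow K \<and> card X = j}. h (card X))"
    by (rule sum.group[symmetric]) (use fin img in auto)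
  also have "\<dots> = (\<Sum>j\<le>card K. real (card K choose j) * h j)"
  proof (rule sum.cong[OF refl])
    fix j
    have "(\<Sum>X\<in>{X. X \<in> Pow K \<and> card X = j}. h (card X)) = (\<Sum>X\<in>{X. X \<in> Pow K \<and> card X = j}. h j)"
      by (rule sum.cong) auto
    also have "\<dots> = real (card {X. X \<in> Pow K \<and> card X = j}) * h j" by simp
    also have "card {X. X \<in> Pow K \<and> card X = j} = card K choose j"
      using n_subsets[OF fin, of j] by simp
    finally show "(\<Sum>X\<in>{X. X \<in> Pow K \<and> card X = j}. h (card X)) = real (card K choose j) * h j" .
  qed
  finally show ?thesis .
qed

lemma alt_binom:
  "k \<le> N \<Longrightarrow> k \<le> M - N \<Longrightarrow>
   (\<Sum>j\<le>k. (-1)^j * int (k choose j) * int ((M-j) choose (N-j))) = int ((M-k) choose N)"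
proof (induction k arbitrary: M N)
  case 0
  then show ?case by simp
next
  case (Suc k)
  obtain N' where N: "N = Suc N'" using Suc.prems by (cases N) auto
  obtain M' where M: "M = Suc M'" using Suc.prems by (cases M) auto
  define X where "X = (\<lambda>j. int ((M-j) choose (N-j)))"
  have IH1: "(\<Sum>j\<le>k. (-1)^j * int (k choose j) * X j) = int ((M-k) choose N)"
    unfolding X_def using Suc.IH[of N M] Suc.prems by simp
  have IH2: "(\<Sum>j\<le>k. (-1)^j * int (k choose j) * int ((M'-j) choose (N'-j))) = int ((M'-k) choose N')"
    using Suc.IH[of N' M'] Suc.prems M N by simp
  have XS: "X (Suc j) = int ((M'-j) choose (N'-j))" for j unfolding X_def M N by simp
  have s1: "(\<Sum>j\<le>Suc k. (-1)^j * int (Suc k choose j) * X j) = X 0 + (\<Sum>j\<le>k. (-1)^(Suc j) * int (Suc k choose Suc j) * X (Suc j))"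
    unfolding sum.atMost_Suc_shift by simp
  have s2: "(\<Sum>j\<le>k. (-1)^(Suc j) * int (Suc k choose Suc j) * X (Suc j)) =
      (\<Sum>j\<le>k. (-1)^(Suc j) * int (k choose Suc j) * X (Suc j)) + (\<Sum>j\<le>k. (-1)^(Suc j) * int (k choose j) * X (Suc j))"
    by (simp add: sum.distrib[symmetric] algebra_simps)
  have s3: "X 0 + (\<Sum>j\<le>k. (-1)^(Suc j) * int (k choose Suc j) * X (Suc j)) = (\<Sum>j\<le>Suc k. (-1)^j * int (k choose j) * X j)"
    unfolding sum.atMost_Suc_shift by simp
  have s4: "(\<Sum>j\<le>Suc k. (-1)^j * int (k choose j) * X j) = (\<Sum>j\<le>k. (-1)^j * int (k choose j) * X j)"
    by simp
  have s5: "(\<Sum>j\<le>k. (-1)^(Suc j) * int (k choose j) * X (Suc j)) = - (\<Sum>j\<le>k. (-1)^j * int (k choose j) * int ((M'-j) choose (N'-j)))"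
    unfolding XS by (simp add: sum_negf[symmetric])
  have "(\<Sum>j\<le>Suc k. (-1)^j * int (Suc k choose j) * X j) = int ((M-k) choose N) - int ((M'-k) choose N')"
    using s1 s2 s3 s4 s5 IH1 IH2 by simp
  also have "M - k = Suc (M' - k)" using Suc.prems M N by simp
  also have "int (Suc (M' - k) choose N) - int ((M'-k) choose N') = int ((M' - k) choose N)"
    unfolding N by simp
  also have "M' - k = M - Suc k" using M by simp
  finally show ?case unfolding X_def .
qed


lemma L_zero:
  fixes L :: "'a::comm_ring_1 \<Rightarrow> real"
  assumes add: "\<And>x y. L (x + y) = L x + (L y :: real)"
  shows "L 0 = 0"
  using add[of 0 0] by simp

lemma L_sum:
  fixes L :: "'a::comm_ring_1 \<Rightarrow> real"
  assumes add: "\<And>x y. L (x + y) = L x + (L y :: real)"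
  shows "L (sum f A) = (\<Sum>x\<in>A. L (f x))"
proof (cases "finite A")
  case True
  then show ?thesis by (induction A rule: finite_induct) (simp_all add: L_zero[OF add] add)
next
  case False
  then show ?thesis by (simp add: L_zero[OF add])
qed

lemma L_neg:
  fixes L :: "'a::comm_ring_1 \<Rightarrow> real"
  assumes add: "\<And>x y. L (x + y) = L x + (L y :: real)"
  shows "L (- x) = - L x"
  using add[of x "-x"] L_zero[OF add] by simp

lemma L_nat_mult:
  fixes L :: "'a::comm_ring_1 \<Rightarrow> real"
  assumes add: "\<And>x y. L (x + y) = L x + (L y :: real)"
  shows "L (of_nat n * x) = real n * L x"
  by (induction n) (simp_all add: L_zero[OF add] add algebra_simps)

lemma L_sign_mult:
  fixes L :: "'a::comm_ring_1 \<Rightarrow> real"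
  assumes add: "\<And>x y. L (x + y) = L x + (L y :: real)"
  shows "L ((-1) ^ n * x) = (-1) ^ n * L x"
  by (cases "even n") (simp_all add: L_neg[OF add])

lemma core:
  fixes a :: "nat \<Rightarrow> nat \<Rightarrow> 'a::field_char_0" and L :: "'a \<Rightarrow> real"
  assumes add: "\<And>x y. L (x + y) = L x + L y" and L1: "L 1 = 1"
    and idem: "\<And>x y. x < M \<Longrightarrow> y < M \<Longrightarrow> (\<Sum>z\<in>{0..<M}. a x z * a z y) = a x y"
    and tr: "(\<Sum>i\<in>{0..<M}. a i i) = of_nat N"
    and kN: "k \<le> N" and kMN: "k \<le> M - N"
    and hyp: "\<And>K. K \<subseteq> {0..<M} \<Longrightarrow> card K = k \<Longrightarrow> L (dt K a) = real (N choose k) / real (M choose k)"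
    and K: "K \<subseteq> {0..<M}" "card K = k"
  shows "L (dt K (\<lambda>r c. (if r = c then 1 else 0) - a r c)) = real ((M - N) choose k) / real (M choose k)"
proof (cases "k = 0")
  case True
  have finK: "finite K" using K finite_subset by blast
  then have "K = {}" using True K by simp
  then show ?thesis using True L1 by simp
next
  case False
  then have NM: "N < M" using kMN by simp
  define v where "v j = real ((M-j) choose (N-j)) / real (M choose N)" for j
  have CMN: "real (M choose N) > 0" using NM by simp
  have CMk: "real (M choose k) > 0" using NM kN by simp
  have top: "L (dt J a) = v k" if "J \<subseteq> {0..<M}" "card J = k" for J
  proof -
    have cm: "real (M choose N) * real (N choose k) = real (M choose k) * real ((M-k) choose (N-k))"
      using choose_mult[of k N M] kN NM by (simp flip: of_nat_mult)
    have "real (N choose k) / real (M choose k) = v k"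
      unfolding v_def using CMN CMk cm by (simp add: field_simps)
    then show ?thesis using hyp that by simp
  qed
  have down: "\<forall>J. J \<subseteq> {0..<M} \<and> card J = k - d \<longrightarrow> L (dt J a) = v (k - d)" if "d \<le> k" for d
    using that
  proof (induction d)
    case 0 then show ?case using top by simp
  next
    case (Suc d)
    show ?case
    proof (intro allI impI)
      fix J assume J: "J \<subseteq> {0..<M} \<and> card J = k - Suc d"
      define j where "j = card J"
      have jk: "j < k" "j + 1 = k - d" "k - Suc d = j" using Suc.prems J j_def by auto
      have finJ: "finite J" using J finite_subset by blast
      have JM: "J \<subseteq> {0..<M}" using J by simp
      have ins: "L (dt (insert i J) a) = v (j+1)" if "i \<in> {0..<M} - J" for i
      proof -
        have "insert i J \<subseteq> {0..<M}" "card (insert i J) = k - d" using that J finJ jk j_def by auto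
        then show ?thesis using Suc.IH[OF Suc_leD[OF Suc.prems]] jk by simp
      qed
      have cardC: "card ({0..<M} - J) = M - j" using card_Diff_subset[OF finJ JM] j_def by simp
      have "L (\<Sum>i\<in>{0..<M}-J. dt (insert i J) a) = (\<Sum>i\<in>{0..<M}-J. L (dt (insert i J) a))"
        by (rule L_sum[OF add])
      also have "\<dots> = (\<Sum>i\<in>{0..<M}-J. v (j+1))" by (rule sum.cong[OF refl]) (rule ins)
      also have "\<dots> = real (M - j) * v (j+1)" using cardC by simp
      finally have "L (\<Sum>i\<in>{0..<M}-J. dt (insert i J) a) = real (M - j) * v (j+1)" .
      moreover have "(\<Sum>i\<in>{0..<M}-J. dt (insert i J) a) = of_nat (N - j) * dt J a"
        using sum_border[OF JM idem tr] j_def jk kN by (simp add: of_nat_diff)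
      ultimately have eq: "real (N - j) * L (dt J a) = real (M - j) * v (j+1)"
        using L_nat_mult[OF add] by simp
      have bin: "(N - j) * ((M - j) choose (N - j)) = (M - j) * ((M - j - 1) choose (N - j - 1))"
        using times_binomial_minus1_eq[of "N - j" "M - j"] jk kN by simp
      have vj: "real (N - j) * v j = real (M - j) * v (j+1)"
        unfolding v_def using bin by (simp add: diff_diff_add flip: of_nat_mult)
      have nz: "real (N - j) \<noteq> 0" using jk kN by simp
      have "real (N - j) * L (dt J a) = real (N - j) * v j" using eq vj by simp
      then have "L (dt J a) = v j" using nz by (simp only: mult_cancel_left) simp
      then show "L (dt J a) = v (k - Suc d)" using jk by simp
    qed
  qed
  have allv: "L (dt X a) = v (card X)" if "X \<subseteq> {0..<M}" "card X \<le> k" for X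
    using down[of "k - card X"] that by auto
  have finK: "finite K" using K finite_subset by blast
  have "L (dt K (\<lambda>r c. (if r = c then 1 else 0) - a r c)) = L (\<Sum>X\<in>Pow K. (-1) ^ card X * dt X a)"
    by (rule arg_cong[where f=L], rule dt_one_minus[OF finK])
  also have "\<dots> = (\<Sum>X\<in>Pow K. (-1) ^ card X * v (card X))"
  proof -
    have "\<And>X. X \<in> Pow K \<Longrightarrow> L ((-1) ^ card X * dt X a) = (-1) ^ card X * v (card X)"
    proof -
      fix X assume "X \<in> Pow K"
      then have "X \<subseteq> {0..<M}" "card X \<le> k" using K card_mono[OF finK] by auto
      then show "L ((-1) ^ card X * dt X a) = (-1) ^ card X * v (card X)"
        using allv L_sign_mult[OF add] by simp
    qed
    then show ?thesis unfolding L_sum[OF add] by (rule sum.cong[OF refl])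
  qed
  also have "\<dots> = (\<Sum>j\<le>k. real (k choose j) * ((-1) ^ j * v j))"
    using sum_pow_card[OF finK, of "\<lambda>j. (-1) ^ j * v j"] K by simp
  also have "\<dots> = (\<Sum>j\<le>k. (-1) ^ j * real (k choose j) * real ((M-j) choose (N-j))) / real (M choose N)"
    unfolding v_def by (simp add: sum_divide_distrib algebra_simps)
  also have "(\<Sum>j\<le>k. (-1) ^ j * real (k choose j) * real ((M-j) choose (N-j))) = real ((M-k) choose N)"
  proof -
    have "real_of_int (\<Sum>j\<le>k. (-1)^j * int (k choose j) * int ((M-j) choose (N-j))) = real_of_int (int ((M-k) choose N))"
      using alt_binom[OF kN kMN] by simp
    then show ?thesis by simp
  qed
  also have "real ((M-k) choose N) / real (M choose N) = real ((M - N) choose k) / real (M choose k)"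
  proof -
    have c1: "(M choose (N+k)) * ((N+k) choose k) = (M choose k) * ((M-k) choose N)"
      using choose_mult[of k "N+k" M] kMN NM by simp
    have c2: "(M choose (N+k)) * ((N+k) choose N) = (M choose N) * ((M-N) choose k)"
      using choose_mult[of N "N+k" M] kMN NM by simp
    have "((N+k) choose k) = ((N+k) choose N)" using binomial_symmetric[of k "N+k"] by simp
    then have "(M choose k) * ((M-k) choose N) = (M choose N) * ((M-N) choose k)" using c1 c2 by simp
    then have "real (M choose k) * real ((M-k) choose N) = real (M choose N) * real ((M-N) choose k)"
      by (simp flip: of_nat_mult)
    then show ?thesis using CMN CMk by (simp add: field_simps)
  qed
  finally show ?thesis .
qed


lemma adj_dims[simp]: "dim_row (mat_adjoint A) = dim_col A" "dim_col (mat_adjoint A) = dim_row A"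
  by (simp_all add: mat_adjoint_def)

lemma adj_index: "i < dim_col A \<Longrightarrow> j < dim_row A \<Longrightarrow> mat_adjoint A $$ (i,j) = conjugate (A $$ (j,i))"
  unfolding mat_adjoint_def by (simp add: mat_of_rows_index)

lemma adjmult_index:
  "i < dim_col A \<Longrightarrow> j < dim_col A \<Longrightarrow>
   (mat_adjoint A * A) $$ (i,j) = (\<Sum>r\<in>{0..<dim_row A}. conjugate (A $$ (r,i)) * A $$ (r,j))"
  by (simp add: scalar_prod_def adj_index)

lemma pick_atLeastLessThan: "r < n \<Longrightarrow> pick {0..<n} r = r"
proof (induction r)
  case 0
  then show ?case by (auto intro!: Least_equality)
next
  case (Suc r)
  then show ?case by (auto intro!: Least_equality)
qed

lemma gram_dt:
  fixes A :: "'a::conjugatable_field mat"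
  assumes K: "K \<subseteq> {0..<dim_col A}"
  shows "det (mat_adjoint (cols_sub A K) * cols_sub A K) = dt K (\<lambda>i j. (mat_adjoint A * A) $$ (i,j))"
proof -
  let ?B = "cols_sub A K"
  have cK: "{j. j < dim_col A \<and> j \<in> K} = K" using K by auto
  have cR: "{j. j < dim_row A \<and> j \<in> {0..<dim_row A}} = {0..<dim_row A}" by auto
  have dB: "dim_row ?B = dim_row A" "dim_col ?B = card K"
    unfolding cols_sub_def dim_submatrix cK cR by simp_all
  have finK: "finite K" using K finite_subset by blast
  have pk: "pick K i < dim_col A" if "i < card K" for i
    using pick_in_set_le[OF that] K by auto
  have eq: "mat_adjoint ?B * ?B = submatrix (mat_adjoint A * A) K K"
  proof (rule eq_matI)
    show "dim_row (mat_adjoint ?B * ?B) = dim_row (submatrix (mat_adjoint A * A) K K)"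
      using dB by (simp add: dim_submatrix cK)
    show "dim_col (mat_adjoint ?B * ?B) = dim_col (submatrix (mat_adjoint A * A) K K)"
      using dB by (simp add: dim_submatrix cK)
    fix i j assume i: "i < dim_row (submatrix (mat_adjoint A * A) K K)" and j: "j < dim_col (submatrix (mat_adjoint A * A) K K)"
    then have i': "i < card K" and j': "j < card K" by (simp_all add: dim_submatrix cK)
    have Bidx: "?B $$ (r, c) = A $$ (r, pick K c)" if "r < dim_row A" "c < card K" for r c
      unfolding cols_sub_def using that
      by (subst submatrix_index) (simp_all add: cK cR pick_atLeastLessThan)
    have "(mat_adjoint ?B * ?B) $$ (i,j) = (\<Sum>r\<in>{0..<dim_row A}. conjugate (?B $$ (r,i)) * ?B $$ (r,j))"
      using adjmult_index[of i ?B j] i' j' dB by simp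
    also have "\<dots> = (\<Sum>r\<in>{0..<dim_row A}. conjugate (A $$ (r, pick K i)) * A $$ (r, pick K j))"
      using Bidx i' j' by simp
    also have "\<dots> = (mat_adjoint A * A) $$ (pick K i, pick K j)"
      using adjmult_index[of "pick K i" A "pick K j"] pk i' j' by simp
    also have "\<dots> = submatrix (mat_adjoint A * A) K K $$ (i,j)"
      using i' j' by (subst submatrix_index) (simp_all add: cK)
    finally show "(mat_adjoint ?B * ?B) $$ (i,j) = submatrix (mat_adjoint A * A) K K $$ (i,j)" .
  qed
  show ?thesis unfolding eq by (rule det_submatrix_dt) (use K in auto)
qed


lemma frame_facts:
  fixes Phi :: "'a::conjugatable_field mat"
  assumes pf: "parseval_frame N M Phi"
  shows "\<And>x y. x < M \<Longrightarrow> y < M \<Longrightarrow>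
      (\<Sum>z\<in>{0..<M}. (mat_adjoint Phi * Phi) $$ (x,z) * (mat_adjoint Phi * Phi) $$ (z,y)) = (mat_adjoint Phi * Phi) $$ (x,y)"
    and "(\<Sum>i\<in>{0..<M}. (mat_adjoint Phi * Phi) $$ (i,i)) = of_nat N"
proof -
  have pf': "Phi \<in> carrier_mat N M \<and> Phi * mat_adjoint Phi = 1\<^sub>m N"
    using pf unfolding parseval_frame_def .
  have Phi: "Phi \<in> carrier_mat N M" and one: "Phi * mat_adjoint Phi = 1\<^sub>m N"
    using pf' by blast+
  have Adj: "mat_adjoint Phi \<in> carrier_mat M N"
    using carrier_matD[OF Phi] by (intro carrier_matI) simp_all
  define P where "P = mat_adjoint Phi * Phi"
  have PC: "P \<in> carrier_mat M M" unfolding P_def by (rule mult_carrier_mat[OF Adj Phi])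
  have "P * P = mat_adjoint Phi * (Phi * (mat_adjoint Phi * Phi))"
    unfolding P_def by (rule assoc_mult_mat[OF Adj Phi PC[unfolded P_def]])
  also have "Phi * (mat_adjoint Phi * Phi) = (Phi * mat_adjoint Phi) * Phi"
    by (rule assoc_mult_mat[OF Phi Adj Phi, symmetric])
  also have "\<dots> = Phi" unfolding one using Phi by simp
  finally have PP: "P * P = P" unfolding P_def .
  show "(\<Sum>z\<in>{0..<M}. (mat_adjoint Phi * Phi) $$ (x,z) * (mat_adjoint Phi * Phi) $$ (z,y)) = (mat_adjoint Phi * Phi) $$ (x,y)"
    if "x < M" "y < M" for x y
  proof -
    have "(P * P) $$ (x,y) = (\<Sum>z\<in>{0..<M}. P $$ (x,z) * P $$ (z,y))"
      using PC that by (simp add: scalar_prod_def)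
    then show ?thesis using PP unfolding P_def by simp
  qed
  have "(\<Sum>i\<in>{0..<M}. P $$ (i,i)) = (\<Sum>i\<in>{0..<M}. \<Sum>r\<in>{0..<N}. conjugate (Phi $$ (r,i)) * Phi $$ (r,i))"
    unfolding P_def using carrier_matD[OF Phi] by (intro sum.cong refl) (simp add: scalar_prod_def adj_index)
  also have "\<dots> = (\<Sum>r\<in>{0..<N}. \<Sum>i\<in>{0..<M}. conjugate (Phi $$ (r,i)) * Phi $$ (r,i))"
    by (rule sum.swap)
  also have "\<dots> = (\<Sum>r\<in>{0..<N}. (Phi * mat_adjoint Phi) $$ (r,r))"
    using Phi by (intro sum.cong refl) (simp add: scalar_prod_def adj_index mult.commute)
  also have "\<dots> = of_nat N" unfolding one by simp
  finally show "(\<Sum>i\<in>{0..<M}. (mat_adjoint Phi * Phi) $$ (i,i)) = of_nat N" unfolding P_def .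
qed

lemma main_generic:
  fixes Phi Psi :: "'a::{conjugatable_field,field_char_0} mat" and L :: "'a \<Rightarrow> real"
  assumes add: "\<And>x y. L (x + y) = L x + L y" and L1: "L 1 = 1"
    and pf: "parseval_frame N M Phi" and nc: "naimark_complement N M Phi Psi"
    and kN: "k \<le> N" and kMN: "k \<le> M - N"
    and hyp: "\<And>K. K \<subseteq> {0..<M} \<Longrightarrow> card K = k \<Longrightarrow>
       L (det (mat_adjoint (cols_sub Phi K) * cols_sub Phi K)) = real (N choose k) / real (M choose k)"
    and K: "K \<subseteq> {0..<M}" "card K = k"
  shows "L (det (mat_adjoint (cols_sub Psi K) * cols_sub Psi K)) = real ((M - N) choose k) / real (M choose k)"
proof -
  have pf': "Phi \<in> carrier_mat N M \<and> Phi * mat_adjoint Phi = 1\<^sub>m N"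
    using pf unfolding parseval_frame_def .
  have Phi: "Phi \<in> carrier_mat N M" using pf' by blast
  have nc': "Psi \<in> carrier_mat (M - N) M \<and> mat_adjoint Psi * Psi = 1\<^sub>m M - mat_adjoint Phi * Phi"
    using nc unfolding naimark_complement_def .
  have Psi: "Psi \<in> carrier_mat (M - N) M" and PsiE: "mat_adjoint Psi * Psi = 1\<^sub>m M - mat_adjoint Phi * Phi"
    using nc' by blast+
  note dPhi = carrier_matD[OF Phi] and dPsi = carrier_matD[OF Psi]
  define a where "a = (\<lambda>i j. (mat_adjoint Phi * Phi) $$ (i,j))"
  have KPhi: "K' \<subseteq> {0..<dim_col Phi}" if "K' \<subseteq> {0..<M}" for K' using dPhi that by simp
  have hyp': "L (dt K' a) = real (N choose k) / real (M choose k)" if "K' \<subseteq> {0..<M}" "card K' = k" for K'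
    using hyp[OF that] gram_dt[OF KPhi[OF that(1)]] unfolding a_def by simp
  have "det (mat_adjoint (cols_sub Psi K) * cols_sub Psi K) = dt K (\<lambda>i j. (mat_adjoint Psi * Psi) $$ (i,j))"
    by (rule gram_dt) (use dPsi K in simp)
  also have "\<dots> = dt K (\<lambda>r c. (if r = c then 1 else 0) - a r c)"
  proof (rule dt_cong)
    fix i j assume "i \<in> K" "j \<in> K"
    then have "i < M" "j < M" using K by auto
    then show "(mat_adjoint Psi * Psi) $$ (i,j) = (if i = j then 1 else 0) - a i j"
      unfolding PsiE a_def using dPhi by simp
  qed
  finally have e: "det (mat_adjoint (cols_sub Psi K) * cols_sub Psi K) = dt K (\<lambda>r c. (if r = c then 1 else 0) - a r c)" .
  show ?thesis unfolding e
    by (rule core[OF add L1 _ _ kN kMN hyp' K]) (use frame_facts[OF pf] in \<open>simp_all add: a_def\<close>)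
qed


lemma real_case:
  fixes Phi Psi :: "real mat"
  assumes pf: "parseval_frame N M Phi" and nc: "naimark_complement N M Phi Psi"
    and km: "k \<le> min N (M - N)"
    and h: "\<forall>K. K \<subseteq> {0..<M} \<and> card K = k \<longrightarrow> vol_r (cols_sub Phi K) = cMNk M N k"
  shows "\<forall>K. K \<subseteq> {0..<M} \<and> card K = k \<longrightarrow> vol_r (cols_sub Psi K) = cMNk M (M - N) k"
proof (intro allI impI)
  fix K assume K: "K \<subseteq> {0..<M} \<and> card K = k"
  have hyp: "(\<lambda>x. x) (det (mat_adjoint (cols_sub Phi K') * cols_sub Phi K')) = real (N choose k) / real (M choose k)"
    if "K' \<subseteq> {0..<M}" "card K' = k" for K'
    using h that unfolding vol_r_def cMNk_def by simp
  have "(\<lambda>x. x) (det (mat_adjoint (cols_sub Psi K) * cols_sub Psi K)) = real ((M - N) choose k) / real (M choose k)"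
    by (rule main_generic[where L="\<lambda>x. x", OF _ _ pf nc _ _ hyp]) (use km K in auto)
  then show "vol_r (cols_sub Psi K) = cMNk M (M - N) k" unfolding vol_r_def cMNk_def by simp
qed

lemma complex_case:
  fixes Phi Psi :: "complex mat"
  assumes pf: "parseval_frame N M Phi" and nc: "naimark_complement N M Phi Psi"
    and km: "k \<le> min N (M - N)"
    and h: "\<forall>K. K \<subseteq> {0..<M} \<and> card K = k \<longrightarrow> vol_c (cols_sub Phi K) = cMNk M N k"
  shows "\<forall>K. K \<subseteq> {0..<M} \<and> card K = k \<longrightarrow> vol_c (cols_sub Psi K) = cMNk M (M - N) k"
proof (intro allI impI)
  fix K assume K: "K \<subseteq> {0..<M} \<and> card K = k"
  have hyp: "Re (det (mat_adjoint (cols_sub Phi K') * cols_sub Phi K')) = real (N choose k) / real (M choose k)"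
    if "K' \<subseteq> {0..<M}" "card K' = k" for K'
    using h that unfolding vol_c_def cMNk_def by simp
  have "Re (det (mat_adjoint (cols_sub Psi K) * cols_sub Psi K)) = real ((M - N) choose k) / real (M choose k)"
    by (rule main_generic[where L=Re, OF _ _ pf nc _ _ hyp]) (use km K in auto)
  then show "vol_c (cols_sub Psi K) = cMNk M (M - N) k" unfolding vol_c_def cMNk_def by simp
qed

theorem proposition12:
  shows
  "(\<forall>(N::nat) (M::nat) (k::nat) (Phi::real mat) (Psi::real mat).
      parseval_frame N M Phi \<longrightarrow> naimark_complement N M Phi Psi \<longrightarrow>
      k \<le> min N (M - N) \<longrightarrow>
      (\<forall>K. K \<subseteq> {0..<M} \<and> card K = k \<longrightarrow> vol_r (cols_sub Phi K) = cMNk M N k) \<longrightarrow>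
      (\<forall>K. K \<subseteq> {0..<M} \<and> card K = k \<longrightarrow> vol_r (cols_sub Psi K) = cMNk M (M - N) k))
   \<and>
   (\<forall>(N::nat) (M::nat) (k::nat) (Phi::complex mat) (Psi::complex mat).
      parseval_frame N M Phi \<longrightarrow> naimark_complement N M Phi Psi \<longrightarrow>
      k \<le> min N (M - N) \<longrightarrow>
      (\<forall>K. K \<subseteq> {0..<M} \<and> card K = k \<longrightarrow> vol_c (cols_sub Phi K) = cMNk M N k) \<longrightarrow>
      (\<forall>K. K \<subseteq> {0..<M} \<and> card K = k \<longrightarrow> vol_c (cols_sub Psi K) = cMNk M (M - N) k))"
    apply (rule conjI)
   apply (intro allI impI)
   apply (rule real_case[THEN spec, THEN mp]; assumption)
  apply (intro allI impI)
  apply (rule complex_case[THEN spec, THEN mp]; assumption)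
  done

end
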